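(* Let $(X,\|\cdot\|_X)$ be a normed linear space. The following are equivalent: (i) $\Delta_X^{(c)}(R)<\infty$ for some $R\in(0,\infty)$; (ii) there is $C\in[0,\infty)$ such that $\Delta_X^{(c)}(R)\leq CR$ for all $R\in[0,\infty)$; (iii) $\Delta_X^{(c)}(R)<\infty$ for all $R\in[0,\infty)$ (the coarse Stone property); (iv) $\Delta_X^{(u)}(r)>0$ for all $r>0$ (the uniform Stone property).
   Context: For a cover $\mathcal{U}$ of $X$: $\mathrm{diam}(\mathcal{U})=\sup_{U\in\mathcal{U}}\mathrm{diam}(U)$; $\mathcal{L}(\mathcal{U})=\sup\{d\in[0,\infty): \text{every } E\subseteq X \text{ with } \mathrm{diam}(E)<d \text{ is contained in some } U\in\mathcal{U}\}$; point-finite means each point lies in only finitely many members. $\Delta_X^{(u)}(r)=\sup\{\mathcal{L}(\mathcal{U}): \mathcal{U} \text{ point-finite cover of } X,\ \mathrm{diam}(\mathcal{U})\leq r\}$, $\Delta_X^{(c)}(R)=\inf\{\mathrm{diam}(\mathcal{U}): \mathcal{U} \text{ point-finite cover of } X,\ \mathcal{L}(\mathcal{U})\geq R\}$. *)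

theory Defs
  imports "HOL-Analysis.Analysis"
begin

definition ediam :: "'a::metric_space set \<Rightarrow> ereal" where
  "ediam E = (if E = {} then 0 else Sup {ereal (dist x y) | x y. x \<in> E \<and> y \<in> E})"

definition cover_diam :: "'a::metric_space set set \<Rightarrow> ereal" where
  "cover_diam \<U> = Sup (ediam ` \<U>)"

definition lebesgue_num :: "'a::metric_space set set \<Rightarrow> ereal" where
  "lebesgue_num \<U> = Sup {ereal d | d. d \<ge> 0 \<and>
      (\<forall>E. ediam E < ereal d \<longrightarrow> (\<exists>U\<in>\<U>. E \<subseteq> U))}"

definition point_finite_cover :: "'a set set \<Rightarrow> bool" where
  "point_finite_cover \<U> \<longleftrightarrow> \<Union>\<U> = UNIV \<and> (\<forall>x. finite {U \<in> \<U>. x \<in> U})"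

definition Delta_u :: "'a::metric_space itself \<Rightarrow> real \<Rightarrow> ereal" where
  "Delta_u _ r = Sup {lebesgue_num \<U> | \<U>::'a set set.
      point_finite_cover \<U> \<and> cover_diam \<U> \<le> ereal r}"

definition Delta_c :: "'a::metric_space itself \<Rightarrow> real \<Rightarrow> ereal" where
  "Delta_c _ R = Inf {cover_diam \<U> | \<U>::'a set set.
      point_finite_cover \<U> \<and> lebesgue_num \<U> \<ge> ereal R}"

end

theory Submission
  imports Defs
begin

definition sc :: "real \<Rightarrow> 'a::real_normed_vector set set \<Rightarrow> 'a set set" where
  "sc t U = (\<lambda>S. (\<lambda>x. t *\<^sub>R x) ` S) ` U"

lemma ediam_nonneg: "ediam E \<ge> 0"
proof (cases "E = {}")
  case True then show ?thesis by (simp add: ediam_def)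
next
  case False
  then obtain x where "x \<in> E" by blast
  then have "ereal (dist x x) \<le> Sup {ereal (dist x y) | x y. x \<in> E \<and> y \<in> E}"
    by (intro Sup_upper) blast
  then show ?thesis using False by (simp add: ediam_def zero_ereal_def)
qed

lemma ediam_scale:
  fixes E :: "'a::real_normed_vector set"
  shows "ediam ((\<lambda>x. c *\<^sub>R x) ` E) \<le> ereal \<bar>c\<bar> * ediam E"
proof (cases "E = {}")
  case True then show ?thesis by (simp add: ediam_def)
next
  case False
  have "Sup {ereal (dist x y) | x y. x \<in> (\<lambda>x. c *\<^sub>R x) ` E \<and> y \<in> (\<lambda>x. c *\<^sub>R x) ` E}
      \<le> ereal \<bar>c\<bar> * ediam E"
  proof (rule Sup_least)
    fix z assume "z \<in> {ereal (dist x y) | x y. x \<in> (\<lambda>x. c *\<^sub>R x) ` E \<and> y \<in> (\<lambda>x. c *\<^sub>R x) ` E}"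
    then obtain a b where ab: "a \<in> E" "b \<in> E" "z = ereal (dist (c *\<^sub>R a) (c *\<^sub>R b))" by blast
    have d: "dist (c *\<^sub>R a) (c *\<^sub>R b) = \<bar>c\<bar> * dist a b"
      by (simp add: dist_norm scaleR_diff_right[symmetric])
    have "ereal (dist a b) \<le> ediam E"
      using False ab unfolding ediam_def by (auto intro!: Sup_upper)
    then have "ereal \<bar>c\<bar> * ereal (dist a b) \<le> ereal \<bar>c\<bar> * ediam E"
      by (intro ereal_mult_left_mono) auto
    then show "z \<le> ereal \<bar>c\<bar> * ediam E" using ab d by simp
  qed
  then show ?thesis using False by (simp add: ediam_def)
qed

lemma sc_cover:
  fixes U :: "'a::real_normed_vector set set"
  assumes t: "t > 0" and pf: "point_finite_cover U"
  shows "point_finite_cover (sc t U)"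
  unfolding point_finite_cover_def
proof (intro conjI allI)
  show "\<Union> (sc t U) = UNIV"
  proof (rule set_eqI, simp)
    fix x :: 'a
    from pf obtain S where "S \<in> U" "inverse t *\<^sub>R x \<in> S" unfolding point_finite_cover_def by blast
    moreover have "x = t *\<^sub>R (inverse t *\<^sub>R x)" using t by simp
    ultimately show "\<exists>V\<in>sc t U. x \<in> V" unfolding sc_def by blast
  qed
next
  fix x :: 'a
  have "{V \<in> sc t U. x \<in> V} \<subseteq> (\<lambda>S. (\<lambda>x. t *\<^sub>R x) ` S) ` {S \<in> U. inverse t *\<^sub>R x \<in> S}"
  proof
    fix V assume "V \<in> {V \<in> sc t U. x \<in> V}"
    then obtain S where S: "S \<in> U" "V = (\<lambda>x. t *\<^sub>R x) ` S" "x \<in> V" unfolding sc_def by blast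
    then obtain y where "y \<in> S" "x = t *\<^sub>R y" by blast
    then have "inverse t *\<^sub>R x \<in> S" using t by simp
    then show "V \<in> (\<lambda>S. (\<lambda>x. t *\<^sub>R x) ` S) ` {S \<in> U. inverse t *\<^sub>R x \<in> S}" using S by blast
  qed
  moreover have "finite {S \<in> U. inverse t *\<^sub>R x \<in> S}" using pf unfolding point_finite_cover_def by blast
  ultimately show "finite {V \<in> sc t U. x \<in> V}" by (meson finite_imageI finite_subset)
qed

lemma sc_diam:
  fixes U :: "'a::real_normed_vector set set"
  assumes t: "t > 0" and B: "cover_diam U \<le> ereal B"
  shows "cover_diam (sc t U) \<le> ereal (t * B)"
  unfolding cover_diam_def sc_def
proof (rule Sup_least)
  fix z assume "z \<in> ediam ` (\<lambda>S. (\<lambda>x. t *\<^sub>R x) ` S) ` U"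
  then obtain S where S: "S \<in> U" "z = ediam ((\<lambda>x. t *\<^sub>R x) ` S)" by blast
  have "ediam S \<le> ereal B" using B S unfolding cover_diam_def
    by (meson SUP_upper order_trans)
  then have "ereal t * ediam S \<le> ereal t * ereal B" using t
    by (intro ereal_mult_left_mono) auto
  moreover have "z \<le> ereal t * ediam S" using ediam_scale[of t S] S t by simp
  ultimately show "z \<le> ereal (t * B)" by simp
qed

lemma sc_adm:
  fixes U :: "'a::real_normed_vector set set"
  assumes t: "t > 0" and d: "\<forall>E. ediam E < ereal d \<longrightarrow> (\<exists>U\<in>U. E \<subseteq> U)"
  shows "\<forall>E. ediam E < ereal (t * d) \<longrightarrow> (\<exists>V\<in>sc t U. E \<subseteq> V)"
proof (intro allI impI)
  fix E :: "'a set" assume E: "ediam E < ereal (t * d)"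
  let ?E = "(\<lambda>x. inverse t *\<^sub>R x) ` E"
  have "ediam ?E \<le> ereal (inverse t) * ediam E" using ediam_scale[of "inverse t" E] t by simp
  also have "\<dots> < ereal (inverse t) * ereal (t * d)"
    using E t ediam_nonneg[of E]
    by (cases "ediam E") (auto)
  also have "\<dots> = ereal d" using t by simp
  finally obtain S where S: "S \<in> U" "?E \<subseteq> S" using d by blast
  have "E \<subseteq> (\<lambda>x. t *\<^sub>R x) ` S"
  proof
    fix x assume "x \<in> E"
    then have "inverse t *\<^sub>R x \<in> S" using S by blast
    moreover have "x = t *\<^sub>R (inverse t *\<^sub>R x)" using t by simp
    ultimately show "x \<in> (\<lambda>x. t *\<^sub>R x) ` S" by blast
  qed
  then show "\<exists>V\<in>sc t U. E \<subseteq> V" using S unfolding sc_def by blast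
qed

lemma sc_leb:
  fixes U :: "'a::real_normed_vector set set"
  assumes t: "t > 0"
  shows "ereal t * lebesgue_num U \<le> lebesgue_num (sc t U)"
proof -
  let ?A = "{d. d \<ge> 0 \<and> (\<forall>E. ediam E < ereal d \<longrightarrow> (\<exists>U\<in>U. E \<subseteq> U))}"
  have eq: "lebesgue_num U = (SUP d\<in>?A. ereal d)"
    unfolding lebesgue_num_def by (rule arg_cong[where f=Sup]) blast
  have ne: "?A \<noteq> {}"
  proof -
    have "(0::real) \<in> ?A" using ediam_nonneg by (auto simp: not_less[symmetric] zero_ereal_def[symmetric])
    then show ?thesis by blast
  qed
  have "ereal t * lebesgue_num U = (SUP d\<in>?A. ereal t * ereal d)"
    unfolding eq using ne t by (intro Sup_ereal_mult_left') auto
  also have "\<dots> \<le> lebesgue_num (sc t U)"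
  proof (rule SUP_least)
    fix d assume "d \<in> ?A"
    then have "t * d \<ge> 0" "\<forall>E. ediam E < ereal (t * d) \<longrightarrow> (\<exists>V\<in>sc t U. E \<subseteq> V)"
      using sc_adm[OF t] t by auto
    then show "ereal t * ereal d \<le> lebesgue_num (sc t U)"
      unfolding lebesgue_num_def by (auto intro!: Sup_upper)
  qed
  finally show ?thesis .
qed


lemma Delta_c_le:
  fixes V :: "'a::real_normed_vector set set" and X :: "'a itself"
  assumes "point_finite_cover V" "lebesgue_num V \<ge> ereal R"
  shows "Delta_c X R \<le> cover_diam V"
  unfolding Delta_c_def by (rule Inf_lower) (use assms in blast)

lemma Delta_u_ge:
  fixes V :: "'a::real_normed_vector set set" and X :: "'a itself"
  assumes "point_finite_cover V" "cover_diam V \<le> ereal r"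
  shows "lebesgue_num V \<le> Delta_u X r"
  unfolding Delta_u_def by (rule Sup_upper) (use assms in blast)

lemma Delta_c_zero:
  fixes X :: "'a::real_normed_vector itself"
  shows "Delta_c X 0 \<le> 0"
proof -
  let ?S = "(\<lambda>x::'a. {x}) ` UNIV"
  have pf: "point_finite_cover ?S"
    unfolding point_finite_cover_def
  proof (intro conjI allI)
    show "\<Union> ?S = UNIV" by auto
    fix x :: 'a
    have "{U \<in> ?S. x \<in> U} = {{x}}" by auto
    then show "finite {U \<in> ?S. x \<in> U}" by simp
  qed
  have ed: "ediam {x} = 0" for x :: 'a
    unfolding ediam_def by (simp add: zero_ereal_def)
  have "cover_diam ?S \<le> 0" unfolding cover_diam_def using ed by (auto intro!: Sup_least)
  moreover have "lebesgue_num ?S \<ge> ereal 0"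
    unfolding lebesgue_num_def using ediam_nonneg
    by (intro Sup_upper) (auto simp: not_less[symmetric] zero_ereal_def[symmetric])
  ultimately show ?thesis using Delta_c_le[OF pf, of 0 X] by simp
qed

lemma finite_bound:
  fixes U :: "'a::real_normed_vector set set"
  assumes "cover_diam U < \<infinity>"
  obtains B where "B > 0" "cover_diam U \<le> ereal B"
proof (cases "cover_diam U")
  case (real r) then show ?thesis using that[of "max r 0 + 1"] by simp
next
  case PInf then show ?thesis using assms by simp
next
  case MInf then show ?thesis using that[of 1] by simp
qed

lemma i_ii:
  fixes X :: "'a::real_normed_vector itself"
  assumes R0: "R0 > 0" and fin: "Delta_c X R0 < \<infinity>"
  shows "\<exists>C\<ge>0. \<forall>R\<ge>0. Delta_c X R \<le> ereal (C * R)"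
proof -
  from fin obtain U :: "'a set set" where U: "point_finite_cover U" "lebesgue_num U \<ge> ereal R0"
    "cover_diam U < \<infinity>"
    unfolding Delta_c_def Inf_less_iff by blast
  obtain B where B: "B > 0" "cover_diam U \<le> ereal B" using finite_bound[OF U(3)] by blast
  show ?thesis
  proof (intro exI[of _ "B / R0"] conjI allI impI)
    show "B / R0 \<ge> 0" using B R0 by simp
    fix R :: real assume R: "R \<ge> 0"
    show "Delta_c X R \<le> ereal (B / R0 * R)"
    proof (cases "R = 0")
      case True then show ?thesis using Delta_c_zero[of X] by (simp add: zero_ereal_def)
    next
      case False
      define t where "t = R / R0"
      have t: "t > 0" using False R R0 by (simp add: t_def)
      have "ereal t * ereal R0 \<le> ereal t * lebesgue_num U"
        using U(2) t by (intro ereal_mult_left_mono) auto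
      also have "\<dots> \<le> lebesgue_num (sc t U)" by (rule sc_leb[OF t])
      finally have "ereal R \<le> lebesgue_num (sc t U)" using R0 by (simp add: t_def)
      then have "Delta_c X R \<le> cover_diam (sc t U)"
        using Delta_c_le[OF sc_cover[OF t U(1)]] by blast
      also have "\<dots> \<le> ereal (t * B)" by (rule sc_diam[OF t B(2)])
      finally show ?thesis by (simp add: t_def algebra_simps)
    qed
  qed
qed

lemma iii_iv:
  fixes X :: "'a::real_normed_vector itself"
  assumes fin: "Delta_c X 1 < \<infinity>" and r: "r > 0"
  shows "Delta_u X r > 0"
proof -
  from fin obtain U :: "'a set set" where U: "point_finite_cover U" "lebesgue_num U \<ge> ereal 1"
    "cover_diam U < \<infinity>"
    unfolding Delta_c_def Inf_less_iff by blast
  obtain B where B: "B > 0" "cover_diam U \<le> ereal B" using finite_bound[OF U(3)] by blast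
  define t where "t = r / B"
  have t: "t > 0" using r B by (simp add: t_def)
  have "ereal t * ereal 1 \<le> ereal t * lebesgue_num U"
    using U(2) t by (intro ereal_mult_left_mono) auto
  also have "\<dots> \<le> lebesgue_num (sc t U)" by (rule sc_leb[OF t])
  also have "\<dots> \<le> Delta_u X r"
  proof (rule Delta_u_ge[OF sc_cover[OF t U(1)]])
    show "cover_diam (sc t U) \<le> ereal r" using sc_diam[OF t B(2)] B by (simp add: t_def)
  qed
  finally have "ereal t \<le> Delta_u X r" by simp
  moreover have "0 < ereal t" using t by simp
  ultimately show ?thesis by (rule less_le_trans[rotated])
qed

lemma iv_iii:
  fixes X :: "'a::real_normed_vector itself"
  assumes pos: "Delta_u X 1 > 0" and R: "R \<ge> 0"
  shows "Delta_c X R < \<infinity>"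
proof -
  from pos obtain U :: "'a set set" where U: "point_finite_cover U" "cover_diam U \<le> ereal 1"
    "lebesgue_num U > 0"
    unfolding Delta_u_def less_Sup_iff by blast
  obtain e where e: "0 < ereal e" "ereal e < lebesgue_num U" using ereal_dense2[OF U(3)] by blast
  have e0: "e > 0" using e(1) by simp
  define t where "t = (R + 1) / e"
  have t: "t > 0" using e0 R by (simp add: t_def)
  have "ereal t * ereal e \<le> ereal t * lebesgue_num U"
    using e(2) t by (intro ereal_mult_left_mono) auto
  also have "\<dots> \<le> lebesgue_num (sc t U)" by (rule sc_leb[OF t])
  finally have "ereal (R + 1) \<le> lebesgue_num (sc t U)" using e0 by (simp add: t_def)
  then have "ereal R \<le> lebesgue_num (sc t U)" by (rule order_trans[rotated]) simp
  then have "Delta_c X R \<le> cover_diam (sc t U)"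
    using Delta_c_le[OF sc_cover[OF t U(1)]] by blast
  also have "\<dots> \<le> ereal (t * 1)" by (rule sc_diam[OF t U(2)])
  finally show ?thesis using le_less_trans[of _ "ereal (t*1)" \<infinity>] by simp
qed

theorem lemma3p7:
  fixes X :: "'a::real_normed_vector itself"
  shows "((\<exists>R>0. Delta_c X R < \<infinity>)
           \<longleftrightarrow> (\<exists>C\<ge>0. \<forall>R\<ge>0. Delta_c X R \<le> ereal (C * R)))
       \<and> ((\<exists>C\<ge>0. \<forall>R\<ge>0. Delta_c X R \<le> ereal (C * R))
           \<longleftrightarrow> (\<forall>R\<ge>0. Delta_c X R < \<infinity>))
       \<and> ((\<forall>R\<ge>0. Delta_c X R < \<infinity>)
           \<longleftrightarrow> (\<forall>r>0. Delta_u X r > 0))"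
proof -
  have ii_iii: "\<forall>R\<ge>0. Delta_c X R < \<infinity>" if H: "\<exists>C\<ge>0. \<forall>R\<ge>0. Delta_c X R \<le> ereal (C * R)"
  proof (intro allI impI)
    fix R :: real assume "R \<ge> 0"
    then obtain C where "Delta_c X R \<le> ereal (C * R)" using H by blast
    then show "Delta_c X R < \<infinity>" using le_less_trans by fastforce
  qed
  have A: "\<exists>C\<ge>0. \<forall>R\<ge>0. Delta_c X R \<le> ereal (C * R)" if "\<exists>R>0. Delta_c X R < \<infinity>"
    using that i_ii[of _ X] by blast
  have B: "\<forall>r>0. Delta_u X r > 0" if "\<forall>R\<ge>0. Delta_c X R < \<infinity>"
    using that iii_iv[of X] by simp
  have C: "\<forall>R\<ge>0. Delta_c X R < \<infinity>" if "\<forall>r>0. Delta_u X r > 0"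
    using that iv_iii[of X] by simp
  have D: "\<exists>R>0. Delta_c X R < \<infinity>" if "\<forall>R\<ge>0. Delta_c X R < \<infinity>"
    using that by (intro exI[of _ 1]) simp
  show ?thesis using A B C D ii_iii by blast
qed

end
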